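(* Let $\mathcal F_1$ be a finite set of partial patterns. Then there exists a finite set $\mathcal F_2$ of permutation patterns (permutation matrices) such that $C_n(\mathcal F_1)=C_n(\mathcal F_2)$ for all $n\in\mathbb N$.
   Context: A partial pattern is a $0$-$1$ matrix (not necessarily square) in which every row and every column contains at most one $1$; every permutation matrix is a partial pattern. An $n\times n$ permutation matrix $M$ contains a partial pattern $L$ if $L$ can be obtained from $M$ by deleting some rows and columns, and avoids $L$ otherwise. For a set $\mathcal F$ of partial patterns, $C_n(\mathcal F)$ is the number of $n\times n$ permutation matrices avoiding every partial pattern in $\mathcal F$. (For permutation matrices, this coincides with the usual notion of permutation pattern containment.) *)

theory Defs
  imports "HOL-Combinatorics.Permutations"
begin

text \<open>A 0-1 matrix with r rows and c columns is represented as a triple (r, c, A)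
  where A i j (for i < r, j < c) is True iff entry (i,j) equals 1
  (rows and columns indexed from 0; values of A outside the range are irrelevant).\<close>

type_synonym zo_matrix = "nat \<times> nat \<times> (nat \<Rightarrow> nat \<Rightarrow> bool)"

definition partial_pattern :: "zo_matrix \<Rightarrow> bool" where
  "partial_pattern L = (case L of (r, c, A) \<Rightarrow>
     (\<forall>i<r. \<forall>j1<c. \<forall>j2<c. A i j1 \<and> A i j2 \<longrightarrow> j1 = j2) \<and>
     (\<forall>j<c. \<forall>i1<r. \<forall>i2<r. A i1 j \<and> A i2 j \<longrightarrow> i1 = i2))"

definition permutation_matrix :: "zo_matrix \<Rightarrow> bool" where
  "permutation_matrix P = (case P of (r, c, A) \<Rightarrow> r = c \<and>
     (\<forall>i<r. \<exists>!j. j < c \<and> A i j) \<and>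
     (\<forall>j<c. \<exists>!i. i < r \<and> A i j))"

definition perm_mat :: "nat \<Rightarrow> (nat \<Rightarrow> nat) \<Rightarrow> zo_matrix" where
  "perm_mat n \<sigma> = (n, n, \<lambda>i j. i < n \<and> j < n \<and> \<sigma> i = j)"

text \<open>M contains L if L is obtained from M by deleting some rows and columns, i.e.
  there are strictly increasing row and column selections under which the entries agree.\<close>
definition contains :: "zo_matrix \<Rightarrow> zo_matrix \<Rightarrow> bool" where
  "contains M L = (case M of (m, k, B) \<Rightarrow> case L of (r, c, A) \<Rightarrow>
     (\<exists>R C. strict_mono_on {..<r} R \<and> (\<forall>i<r. R i < m) \<and>
            strict_mono_on {..<c} C \<and> (\<forall>j<c. C j < k) \<and>
            (\<forall>i<r. \<forall>j<c. B (R i) (C j) = A i j)))"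

text \<open>C_n(F): number of n x n permutation matrices avoiding every pattern in F
  (counted via the bijection with permutations of {0..<n}).\<close>
definition C :: "nat \<Rightarrow> zo_matrix set \<Rightarrow> nat" where
  "C n F = card {\<sigma>. \<sigma> permutes {..<n} \<and> (\<forall>L\<in>F. \<not> contains (perm_mat n \<sigma>) L)}"

end

theory Submission
  imports Defs
begin

lemma enum_exists:
  fixes S :: "nat set"
  assumes "finite S"
  shows "\<exists>e. strict_mono_on {..<card S} e \<and> e ` {..<card S} = S"
proof -
  let ?xs = "sorted_list_of_set S"
  have len: "length ?xs = card S" by simp
  have ss: "sorted_wrt (<) ?xs" by (rule strict_sorted_list_of_set)
  have "strict_mono_on {..<card S} (\<lambda>i. ?xs ! i)"
    unfolding strict_mono_on_def using sorted_wrt_nth_less[OF ss] len by auto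
  moreover have "(\<lambda>i. ?xs ! i) ` {..<card S} = S"
    using set_conv_nth[of ?xs] len assms by (auto simp: lessThan_def)
  ultimately show ?thesis by blast
qed

lemma inv_strict_mono:
  fixes e :: "nat \<Rightarrow> nat"
  assumes "strict_mono_on A e" "e ` A = B"
  shows "strict_mono_on B (inv_into A e)"
  unfolding strict_mono_on_def
proof (intro allI impI)
  fix x y assume xy0: "x \<in> B \<and> y \<in> B \<and> x < y"
  then have xy: "x \<in> B" "y \<in> B" "x < y" by auto
  then obtain a b where ab: "a \<in> A" "b \<in> A" "x = e a" "y = e b" using assms(2) by blast
  have inj: "inj_on e A" using assms(1) strict_mono_on_imp_inj_on by blast
  have "inv_into A e x = a" "inv_into A e y = b" using ab inj by auto
  moreover have "a < b"
  proof (rule ccontr)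
    assume "\<not> a < b"
    then have "b \<le> a" by simp
    then have "e b \<le> e a"
      using assms(1) ab by (metis order.order_iff_strict strict_mono_onD)
    then show False using xy ab by simp
  qed
  ultimately show "inv_into A e x < inv_into A e y" by simp
qed

lemma strict_mono_comp:
  fixes g :: "nat \<Rightarrow> nat" and f :: "nat \<Rightarrow> nat"
  assumes "strict_mono_on A g" "g ` A \<subseteq> B" "strict_mono_on B f"
  shows "strict_mono_on A (f \<circ> g)"
  using assms unfolding strict_mono_on_def by (auto simp: image_subset_iff)

lemma contains_trans:
  assumes "contains (m, k, B) (r2, c2, P)" "contains (r2, c2, P) (r, c, A)"
  shows "contains (m, k, B) (r, c, A)"
proof -
  obtain R1 C1 where 1: "strict_mono_on {..<r2} R1" "\<forall>i<r2. R1 i < m"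
    "strict_mono_on {..<c2} C1" "\<forall>j<c2. C1 j < k" "\<forall>i<r2. \<forall>j<c2. B (R1 i) (C1 j) = P i j"
    using assms(1) unfolding contains_def by auto
  obtain R2 C2 where 2: "strict_mono_on {..<r} R2" "\<forall>i<r. R2 i < r2"
    "strict_mono_on {..<c} C2" "\<forall>j<c. C2 j < c2" "\<forall>i<r. \<forall>j<c. P (R2 i) (C2 j) = A i j"
    using assms(2) unfolding contains_def by auto
  have "strict_mono_on {..<r} (R1 \<circ> R2)"
    by (rule strict_mono_comp[OF 2(1) _ 1(1)]) (use 2(2) in auto)
  moreover have "strict_mono_on {..<c} (C1 \<circ> C2)"
    by (rule strict_mono_comp[OF 2(3) _ 1(3)]) (use 2(4) in auto)
  ultimately show ?thesis unfolding contains_def using 1 2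
    apply simp by (intro exI[of _ "R1 \<circ> R2"] exI[of _ "C1 \<circ> C2"] conjI) auto
qed

lemma perm_mat_perm:
  assumes "\<tau> permutes {..<m}"
  shows "permutation_matrix (perm_mat m \<tau>)"
  unfolding permutation_matrix_def perm_mat_def
proof (simp, intro conjI allI impI)
  fix i assume "i < m"
  then show "\<exists>!j. j < m \<and> \<tau> i = j" using permutes_in_image[OF assms] by auto
next
  fix j assume "j < m"
  then have "inv \<tau> j < m" "\<tau> (inv \<tau> j) = j"
    using permutes_in_image[OF permutes_inv[OF assms]] permutes_inverses(1)[OF assms] by auto
  then show "\<exists>!i. i < m \<and> \<tau> i = j"
    using permutes_inj[OF assms] by (metis injD)
qed

lemma extract_perm:
  assumes sig: "\<sigma> permutes {..<n}" and con: "contains (perm_mat n \<sigma>) (r, c, A)"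
  shows "\<exists>m \<tau>. m \<le> r + c \<and> \<tau> permutes {..<m} \<and> contains (perm_mat n \<sigma>) (perm_mat m \<tau>)
           \<and> contains (perm_mat m \<tau>) (r, c, A)"
proof -
  obtain R Cc where RC: "strict_mono_on {..<r} R" "\<forall>i<r. R i < n"
    "strict_mono_on {..<c} Cc" "\<forall>j<c. Cc j < n"
    "\<forall>i<r. \<forall>j<c. (R i < n \<and> Cc j < n \<and> \<sigma> (R i) = Cc j) = A i j"
    using con unfolding contains_def perm_mat_def by auto
  define S where "S = R ` {..<r} \<union> inv \<sigma> ` Cc ` {..<c}"
  define T where "T = Cc ` {..<c} \<union> \<sigma> ` R ` {..<r}"
  have isig: "inv \<sigma> permutes {..<n}" using permutes_inv[OF sig] .
  have Ssub: "S \<subseteq> {..<n}" unfolding S_def using RC permutes_in_image[OF isig] by auto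
  have Tsub: "T \<subseteq> {..<n}" unfolding T_def using RC permutes_in_image[OF sig] by auto
  have fS: "finite S" "finite T" unfolding S_def T_def by auto
  have sigS: "\<sigma> ` S = T" unfolding S_def T_def
    using permutes_inverses(1)[OF sig] by (auto simp: image_Un image_image)
  have injs: "inj \<sigma>" using permutes_inj[OF sig] .
  have bsig: "bij_betw \<sigma> S T" using sigS injs by (simp add: bij_betw_def inj_on_def inj_def)
  define m where "m = card S"
  have cT: "card T = m" using bij_betw_same_card[OF bsig] m_def by simp
  have mle: "m \<le> r + c"
  proof -
    have "m \<le> card (R ` {..<r}) + card (inv \<sigma> ` Cc ` {..<c})"
      unfolding m_def S_def by (rule card_Un_le)
    also have "\<dots> \<le> r + c"
      using card_image_le[of "{..<r}" R] card_image_le[of "Cc ` {..<c}" "inv \<sigma>"]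
        card_image_le[of "{..<c}" Cc] by simp
    finally show ?thesis .
  qed
  obtain eS where eS: "strict_mono_on {..<m} eS" "eS ` {..<m} = S"
    using enum_exists[OF fS(1)] m_def by auto
  obtain eT where eT: "strict_mono_on {..<m} eT" "eT ` {..<m} = T"
    using enum_exists[OF fS(2)] cT by auto
  define fS' where "fS' = inv_into {..<m} eS"
  define fT where "fT = inv_into {..<m} eT"
  have bS: "bij_betw eS {..<m} S" using eS strict_mono_on_imp_inj_on by (auto simp: bij_betw_def)
  have bT: "bij_betw eT {..<m} T" using eT strict_mono_on_imp_inj_on by (auto simp: bij_betw_def)
  have bfT: "bij_betw fT T {..<m}" unfolding fT_def using bij_betw_inv_into[OF bT] .
  have bfS: "bij_betw fS' S {..<m}" unfolding fS'_def using bij_betw_inv_into[OF bS] .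
  have mfS: "strict_mono_on S fS'" unfolding fS'_def using inv_strict_mono[OF eS] .
  have mfT: "strict_mono_on T fT" unfolding fT_def using inv_strict_mono[OF eT] .
  define \<tau> where "\<tau> i = (if i < m then fT (\<sigma> (eS i)) else i)" for i
  have "bij_betw (fT \<circ> (\<sigma> \<circ> eS)) {..<m} {..<m}"
    by (rule bij_betw_trans[OF bij_betw_trans[OF bS bsig] bfT])
  then have "bij_betw \<tau> {..<m} {..<m}"
    by (rule bij_betw_cong[THEN iffD1, rotated]) (auto simp: \<tau>_def)
  then have tau: "\<tau> permutes {..<m}"
    by (rule bij_imp_permutes) (auto simp: \<tau>_def)
  have fTeq: "fT t = j \<longleftrightarrow> t = eT j" if "t \<in> T" "j < m" for t j
    using that bT unfolding fT_def
    by (metis bij_betw_inv_into_left bij_betw_inv_into_right lessThan_iff)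
  have c1: "contains (perm_mat n \<sigma>) (perm_mat m \<tau>)"
    unfolding contains_def perm_mat_def
  proof (simp, intro exI conjI)
    show "strict_mono_on {..<m} eS" by (rule eS(1))
    show "strict_mono_on {..<m} eT" by (rule eT(1))
    show "\<forall>i<m. eS i < n" using eS(2) Ssub by auto
    show "\<forall>j<m. eT j < n" using eT(2) Tsub by auto
    show "\<forall>i<m. \<forall>j<m. (eS i < n \<and> eT j < n \<and> \<sigma> (eS i) = eT j) = (\<tau> i = j)"
    proof (intro allI impI)
      fix i j assume ij: "i < m" "j < m"
      have "eS i \<in> S" using ij eS(2) by auto
      then have "\<sigma> (eS i) \<in> T" using sigS by auto
      then show "(eS i < n \<and> eT j < n \<and> \<sigma> (eS i) = eT j) = (\<tau> i = j)"
        using fTeq[of "\<sigma> (eS i)" j] ij Ssub Tsub \<open>eS i \<in> S\<close> eT(2) by (auto simp: \<tau>_def)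
    qed
  qed
  have RS: "R ` {..<r} \<subseteq> S" unfolding S_def by auto
  have CT: "Cc ` {..<c} \<subseteq> T" unfolding T_def by auto
  have c2: "contains (perm_mat m \<tau>) (r, c, A)"
    unfolding contains_def perm_mat_def
  proof (simp, intro exI conjI)
    show "strict_mono_on {..<r} (fS' \<circ> R)" by (rule strict_mono_comp[OF RC(1) RS mfS])
    show "strict_mono_on {..<c} (fT \<circ> Cc)" by (rule strict_mono_comp[OF RC(3) CT mfT])
    show "\<forall>i<r. (fS' \<circ> R) i < m" using RS bfS by (auto simp: bij_betw_def)
    show "\<forall>j<c. (fT \<circ> Cc) j < m" using CT bfT by (auto simp: bij_betw_def)
    show "\<forall>i<r. \<forall>j<c. ((fS' \<circ> R) i < m \<and> (fT \<circ> Cc) j < m \<and> \<tau> ((fS' \<circ> R) i) = (fT \<circ> Cc) j) = A i j"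
    proof (intro allI impI)
      fix i j assume ij: "i < r" "j < c"
      have Ri: "R i \<in> S" and Cj: "Cc j \<in> T" using ij RS CT by auto
      have a: "fS' (R i) < m" using Ri bfS by (auto simp: bij_betw_def)
      have b: "fT (Cc j) < m" using Cj bfT by (auto simp: bij_betw_def)
      have e: "eS (fS' (R i)) = R i" unfolding fS'_def using Ri bS
        by (simp add: bij_betw_inv_into_right)
      have tR: "\<tau> (fS' (R i)) = fT (\<sigma> (R i))" using a e by (simp add: \<tau>_def)
      have sT: "\<sigma> (R i) \<in> T" using Ri sigS by auto
      have "fT (\<sigma> (R i)) = fT (Cc j) \<longleftrightarrow> \<sigma> (R i) = Cc j"
        using bfT sT Cj by (metis bij_betw_def inj_on_def)
      then show "((fS' \<circ> R) i < m \<and> (fT \<circ> Cc) j < m \<and> \<tau> ((fS' \<circ> R) i) = (fT \<circ> Cc) j) = A i j"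
        using a b tR RC(5) ij RC(2) RC(4) by auto
    qed
  qed
  show ?thesis using mle tau c1 c2 by blast
qed

theorem proposition3p1:
  assumes "finite F1" and "\<forall>L\<in>F1. partial_pattern L"
  shows "\<exists>F2. finite F2 \<and> (\<forall>P\<in>F2. permutation_matrix P) \<and> (\<forall>n. C n F1 = C n F2)"
proof -
  define N where "N = (\<Sum>L\<in>F1. fst L + fst (snd L))"
  define F2 where "F2 = {perm_mat m \<tau> | m \<tau>. m \<le> N \<and> \<tau> permutes {..<m} \<and>
                          (\<exists>L\<in>F1. contains (perm_mat m \<tau>) L)}"
  have "F2 \<subseteq> (\<Union>m\<in>{..N}. (\<lambda>\<tau>. perm_mat m \<tau>) ` {\<tau>. \<tau> permutes {..<m}})"
    unfolding F2_def by auto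
  moreover have "finite (\<Union>m\<in>{..N}. (\<lambda>\<tau>. perm_mat m \<tau>) ` {\<tau>. \<tau> permutes {..<m}})"
    by (intro finite_UN_I finite_imageI) (auto intro: finite_permutations)
  ultimately have fin: "finite F2" by (rule finite_subset)
  have pm: "\<forall>P\<in>F2. permutation_matrix P" unfolding F2_def using perm_mat_perm by auto
  have eq: "(\<forall>L\<in>F1. \<not> contains (perm_mat n \<sigma>) L) \<longleftrightarrow> (\<forall>P\<in>F2. \<not> contains (perm_mat n \<sigma>) P)"
    if sig: "\<sigma> permutes {..<n}" for n \<sigma>
  proof
    assume H: "\<forall>L\<in>F1. \<not> contains (perm_mat n \<sigma>) L"
    show "\<forall>P\<in>F2. \<not> contains (perm_mat n \<sigma>) P"
    proof (intro ballI notI)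
      fix P assume "P \<in> F2" "contains (perm_mat n \<sigma>) P"
      then obtain m \<tau> L where P: "P = perm_mat m \<tau>" "L \<in> F1" "contains (perm_mat m \<tau>) L"
        unfolding F2_def by auto
      obtain r c A where L: "L = (r, c, A)" by (cases L) auto
      have "contains (perm_mat n \<sigma>) L"
        using contains_trans[of n n _ m m _ r c A] \<open>contains (perm_mat n \<sigma>) P\<close> P L
        by (simp add: perm_mat_def)
      then show False using H P by auto
    qed
  next
    assume H: "\<forall>P\<in>F2. \<not> contains (perm_mat n \<sigma>) P"
    show "\<forall>L\<in>F1. \<not> contains (perm_mat n \<sigma>) L"
    proof (intro ballI notI)
      fix L assume L1: "L \<in> F1" "contains (perm_mat n \<sigma>) L"
      obtain r c A where L: "L = (r, c, A)" by (cases L) auto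
      obtain m \<tau> where mt: "m \<le> r + c" "\<tau> permutes {..<m}"
        "contains (perm_mat n \<sigma>) (perm_mat m \<tau>)" "contains (perm_mat m \<tau>) (r, c, A)"
        using extract_perm[OF sig] L1 L by blast
      have "r + c \<le> N" unfolding N_def
        using member_le_sum[OF L1(1), of "\<lambda>L. fst L + fst (snd L)"] assms(1) L by simp
      then have "perm_mat m \<tau> \<in> F2" unfolding F2_def using mt L1 L by fastforce
      then show False using H mt by auto
    qed
  qed
  have "\<forall>n. C n F1 = C n F2"
  proof
    fix n
    show "C n F1 = C n F2" unfolding C_def
      by (rule arg_cong[where f=card]) (use eq in auto)
  qed
  then show ?thesis using fin pm by blast
qed

end
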